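(* Let $X$ be an r.i. space and let $I$ be a quasiconcave function satisfying $\int_0^t\frac{I(s)}{s}ds\lesssim I(t)$ for $t\in(0,1)$. Then $$\left\|\frac{t}{I(t)}(T_If)^{**}(t)\right\|_X\lesssim\left\|\frac{t}{I(t)}f^{**}(t)\right\|_X,\quad f\in\mathcal M_+(0,1).$$ In other words, $T_I$ is bounded on $(Y_Z)'$ for every r.i. space $Z$, where $Y_Z$ is the optimal target space of $Z$ under $H_I$.
   Context: Functions live on $(0,1)$; $\mathcal M_+(0,1)$ nonnegative measurable functions; $f^*$ nonincreasing rearrangement; $f^{**}(t)=\frac1t\int_0^tf^*$. An r.i. space is a rearrangement-invariant Banach function space on $(0,1)$, $X'$ its associate space ($\|g\|_{X'}=\sup_{\|f\|_X\le1}\int fg$). A quasiconcave function is a nondecreasing bijection $I:(0,1)\to(0,1)$ with $I(0+)=0$, $I(1-)=1$ and $I(t)/t$ nonincreasing. $T_If(t)=\frac{I(t)}{t}\sup_{t\le s<1}\frac{s}{I(s)}f^*(s)$, $H_If(t)=\int_t^1\frac{f(s)}{I(s)}ds$. The optimal target space $Y_Z$ of $Z$ under $H_I$ is the r.i. space with $H_I:Z\to Y_Z$ bounded and $Y_Z\hookrightarrow W$ whenever $H_I:Z\to W$ is bounded for an r.i. space $W$; it is known that $\|g\|_{(Y_Z)'}=\|\frac1{I(t)}\int_0^tg^*(s)ds\|_{Z'}$. $\lesssim$: up to a constant independent of $f$. *)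

theory Defs
  imports "HOL-Analysis.Analysis"
begin

definition M01 :: "real measure" where
  "M01 = lebesgue_on {0<..<1}"

text \<open>Functions in M_+(0,1) are modelled as measurable functions with values in [0,\<infinity>].\<close>

definition distrib :: "(real \<Rightarrow> ennreal) \<Rightarrow> ennreal \<Rightarrow> ennreal" where
  "distrib f y = emeasure M01 {x \<in> space M01. f x > y}"

definition rearr :: "(real \<Rightarrow> ennreal) \<Rightarrow> real \<Rightarrow> ennreal" where
  "rearr f t = Inf {y. distrib f y \<le> ennreal t}"

definition rearr2 :: "(real \<Rightarrow> ennreal) \<Rightarrow> real \<Rightarrow> ennreal" where
  "rearr2 f t = ennreal (1 / t) * (\<integral>\<^sup>+ s \<in> {0<..<t}. rearr f s \<partial>lborel)"

text \<open>Banach function norm on (0,1) (Bennett--Sharpley axioms P1--P5), rearrangement invariant.\<close>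
definition ri_norm :: "((real \<Rightarrow> ennreal) \<Rightarrow> ennreal) \<Rightarrow> bool" where
  "ri_norm \<rho> \<longleftrightarrow>
     \<comment> \<open>P1\<close>
     (\<forall>f \<in> borel_measurable M01. \<rho> f = 0 \<longleftrightarrow> (AE x in M01. f x = 0)) \<and>
     (\<forall>f \<in> borel_measurable M01. \<forall>a::real. a \<ge> 0 \<longrightarrow>
        \<rho> (\<lambda>x. ennreal a * f x) = ennreal a * \<rho> f) \<and>
     (\<forall>f \<in> borel_measurable M01. \<forall>g \<in> borel_measurable M01.
        \<rho> (\<lambda>x. f x + g x) \<le> \<rho> f + \<rho> g) \<and>
     \<comment> \<open>P2 (lattice property)\<close>
     (\<forall>f \<in> borel_measurable M01. \<forall>g \<in> borel_measurable M01.
        (AE x in M01. g x \<le> f x) \<longrightarrow> \<rho> g \<le> \<rho> f) \<and>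
     \<comment> \<open>P3 (Fatou property)\<close>
     (\<forall>fs f. (\<forall>n. fs n \<in> borel_measurable M01) \<longrightarrow> f \<in> borel_measurable M01 \<longrightarrow>
        (AE x in M01. incseq (\<lambda>n. fs n x) \<and> f x = (SUP n. fs n x)) \<longrightarrow>
        \<rho> f = (SUP n. \<rho> (fs n))) \<and>
     \<comment> \<open>P4\<close>
     (\<forall>E \<in> sets M01. \<rho> (indicator E) < \<infinity>) \<and>
     \<comment> \<open>P5\<close>
     (\<forall>E \<in> sets M01. \<exists>C::real. \<forall>f \<in> borel_measurable M01.
        (\<integral>\<^sup>+ x \<in> E. f x \<partial>M01) \<le> ennreal C * \<rho> f) \<and>
     \<comment> \<open>rearrangement invariance\<close>
     (\<forall>f \<in> borel_measurable M01. \<forall>g \<in> borel_measurable M01.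
        distrib f = distrib g \<longrightarrow> \<rho> f = \<rho> g)"

definition quasiconcave :: "(real \<Rightarrow> real) \<Rightarrow> bool" where
  "quasiconcave I \<longleftrightarrow>
     bij_betw I {0<..<1} {0<..<1} \<and> mono_on {0<..<1} I \<and>
     (I \<longlongrightarrow> 0) (at_right 0) \<and> (I \<longlongrightarrow> 1) (at_left 1) \<and>
     antimono_on {0<..<1} (\<lambda>t. I t / t)"

definition T_op :: "(real \<Rightarrow> real) \<Rightarrow> (real \<Rightarrow> ennreal) \<Rightarrow> real \<Rightarrow> ennreal" where
  "T_op I f t = ennreal (I t / t) * (SUP s \<in> {t..<1}. ennreal (s / I s) * rearr f s)"

end

theory Submission
  imports Defs
begin

lemma space_M01[simp]: "space M01 = {0<..<1}"
  by (simp add: M01_def)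

lemma sets_M01I: "A \<in> sets borel \<Longrightarrow> A \<subseteq> {0<..<1} \<Longrightarrow> A \<in> sets M01"
  unfolding M01_def
  by (subst sets_restrict_space_iff) auto

lemma emeasure_M01: "A \<in> sets borel \<Longrightarrow> A \<subseteq> {0<..<1} \<Longrightarrow> emeasure M01 A = emeasure lborel A"
  unfolding M01_def
  by (subst emeasure_restrict_space) auto

lemma interval_M01: "is_interval A \<Longrightarrow> A \<subseteq> {0<..<1} \<Longrightarrow> A \<in> sets M01"
  by (simp add: real_interval_borel_measurable sets_M01I)

lemma mono_meas:
  fixes g :: "real \<Rightarrow> ennreal"
  assumes "mono_on {0<..<1} g" shows "g \<in> borel_measurable M01"
proof (rule borel_measurableI_greater)
  fix y
  have "is_interval {x\<in>{0<..<1::real}. y < g x}"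
    unfolding is_interval_1 
  proof safe
    fix a b x assume "a \<in> {0<..<1::real}" "y < g a" "b \<in> {0<..<1::real}" "a \<le> x" "x \<le> b"
    then show "x \<in> {0<..<1}" "y < g x" using assms
      by (auto intro: less_le_trans[OF _ mono_onD[OF assms]])
  qed
  then show "{x \<in> space M01. y < g x} \<in> sets M01"
    by (auto intro!: interval_M01)
qed

lemma antimono_meas:
  fixes g :: "real \<Rightarrow> ennreal"
  assumes "antimono_on {0<..<1} g" shows "g \<in> borel_measurable M01"
proof (rule borel_measurableI_greater)
  fix y
  have "is_interval {x\<in>{0<..<1::real}. y < g x}"
    unfolding is_interval_1 
  proof safe
    fix a b x assume "a \<in> {0<..<1::real}" "y < g a" "b \<in> {0<..<1::real}" "y < g b" "a \<le> x" "x \<le> b"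
    then show "x \<in> {0<..<1}" "y < g x" using assms
      by (auto intro: less_le_trans[OF _ monotone_onD[OF assms]])
  qed
  then show "{x \<in> space M01. y < g x} \<in> sets M01"
    by (auto intro!: interval_M01)
qed

lemma rho_mono:
  assumes "ri_norm \<rho>" "f \<in> borel_measurable M01" "g \<in> borel_measurable M01"
    "\<And>x. x \<in> {0<..<1} \<Longrightarrow> g x \<le> f x"
  shows "\<rho> g \<le> \<rho> f"
proof -
  have "\<forall>f \<in> borel_measurable M01. \<forall>g \<in> borel_measurable M01.
        (AE x in M01. g x \<le> f x) \<longrightarrow> \<rho> g \<le> \<rho> f"
    using assms(1) unfolding ri_norm_def by (elim conjE) assumption
  moreover have "AE x in M01. g x \<le> f x" using assms(4) by (intro AE_I2) simp
  ultimately show ?thesis using assms(2,3) by blast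
qed

lemma rho_hom:
  assumes "ri_norm \<rho>" "f \<in> borel_measurable M01" "a \<ge> 0"
  shows "\<rho> (\<lambda>x. ennreal a * f x) = ennreal a * \<rho> f"
proof -
  have "\<forall>f \<in> borel_measurable M01. \<forall>a::real. a \<ge> 0 \<longrightarrow>
        \<rho> (\<lambda>x. ennreal a * f x) = ennreal a * \<rho> f"
    using assms(1) unfolding ri_norm_def by (elim conjE) assumption
  then show ?thesis using assms by blast
qed

lemma rho_add:
  assumes "ri_norm \<rho>" "f \<in> borel_measurable M01" "g \<in> borel_measurable M01"
  shows "\<rho> (\<lambda>x. f x + g x) \<le> \<rho> f + \<rho> g"
proof -
  have "\<forall>f \<in> borel_measurable M01. \<forall>g \<in> borel_measurable M01.
        \<rho> (\<lambda>x. f x + g x) \<le> \<rho> f + \<rho> g"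
    using assms(1) unfolding ri_norm_def by (elim conjE) assumption
  then show ?thesis using assms by blast
qed

lemma rho_ri:
  assumes "ri_norm \<rho>" "f \<in> borel_measurable M01" "g \<in> borel_measurable M01" "distrib f = distrib g"
  shows "\<rho> f = \<rho> g"
proof -
  have "\<forall>f \<in> borel_measurable M01. \<forall>g \<in> borel_measurable M01.
        distrib f = distrib g \<longrightarrow> \<rho> f = \<rho> g"
    using assms(1) unfolding ri_norm_def by (elim conjE) assumption
  then show ?thesis using assms by blast
qed

lemma distrib_le1: "distrib f y \<le> 1"
proof -
  have "distrib f y \<le> emeasure M01 (space M01)"
    unfolding distrib_def by (rule emeasure_space)
  also have "\<dots> = 1" by (simp add: emeasure_M01)
  finally show ?thesis .
qed

lemma distrib_antimono:
  assumes "f \<in> borel_measurable M01" "y \<le> z" shows "distrib f z \<le> distrib f y"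
  unfolding distrib_def
proof (rule emeasure_mono)
  show "{x \<in> space M01. f x > y} \<in> sets M01" using assms(1) by measurable
  show "{x \<in> space M01. z < f x} \<subseteq> {x \<in> space M01. y < f x}"
    using assms(2) by (auto intro: le_less_trans)
qed

lemma rearr_antimono: "t \<le> t' \<Longrightarrow> rearr f t' \<le> rearr f t"
  unfolding rearr_def by (rule Inf_superset_mono) (auto intro: order_trans ennreal_leI)

lemma rearr_antimono_on: "antimono_on A (rearr f)"
  by (intro monotone_onI) (simp add: rearr_antimono)

lemma rearr_meas: "rearr f \<in> borel_measurable M01"
  by (rule antimono_meas[OF rearr_antimono_on])

lemma gt_set_meas:
  fixes f :: "'a \<Rightarrow> ennreal"
  assumes "f \<in> borel_measurable M" shows "{x\<in>space M. c < f x} \<in> sets M"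
proof -
  have "{x\<in>space M. c < f x} = f -` {c<..} \<inter> space M" by auto
  also have "\<dots> \<in> sets M" by (rule measurable_sets[OF assms]) simp
  finally show ?thesis .
qed

lemma rearr_in:
  assumes f: "f \<in> borel_measurable M01"
  shows "distrib f (rearr f t) \<le> ennreal t"
proof -
  define S where "S = {y. distrib f y \<le> ennreal t}"
  have up: "z \<in> S" if "y \<in> S" "y \<le> z" for y z
    using that distrib_antimono[OF f] unfolding S_def by (auto intro: order_trans)
  have r: "rearr f t = Inf S" unfolding rearr_def S_def ..
  show ?thesis
  proof (cases "Inf S = top")
    case True
    have "{x \<in> space M01. f x > top} = {}" by auto
    then show ?thesis unfolding r True distrib_def by simp
  next
    case False
    then obtain r0 where r0: "Inf S = ennreal r0" "r0 \<ge> 0"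
      by (cases "Inf S") auto
    define A where "A n = {x \<in> space M01. f x > ennreal (r0 + 1 / Suc n)}" for n
    have AS: "ennreal (r0 + 1 / Suc n) \<in> S" for n
    proof -
      have "Inf S < ennreal (r0 + 1 / Suc n)" using r0 by (simp add: ennreal_less_iff)
      then obtain z where "z \<in> S" "z < ennreal (r0 + 1 / Suc n)"
        by (auto simp: Inf_less_iff)
      then show ?thesis using up by auto
    qed
    have "A n \<in> sets M01" for n unfolding A_def using f by (rule gt_set_meas)
    then have Ameas: "range A \<subseteq> sets M01" by auto
    have Ainc: "incseq A"
    proof (rule incseq_SucI)
      fix n
      have "ennreal (r0 + 1 / Suc (Suc n)) \<le> ennreal (r0 + 1 / Suc n)"
        by (intro ennreal_leI) (simp add: frac_le)
      then show "A n \<subseteq> A (Suc n)" unfolding A_def by (auto intro: le_less_trans)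
    qed
    have U: "{x \<in> space M01. f x > Inf S} = (\<Union>n. A n)"
    proof (intro equalityI subsetI)
      fix x assume x: "x \<in> {x \<in> space M01. f x > Inf S}"
      show "x \<in> (\<Union>n. A n)"
      proof (cases "f x")
        case (real v)
        with x r0 have "v > r0" "v \<ge> 0" by (auto simp: ennreal_less_iff)
        then obtain n where "1 / real (Suc n) < v - r0"
          using nat_approx_posE[of "v - r0"] by auto
        then have "ennreal (r0 + 1 / Suc n) < ennreal v" using r0
          by (subst ennreal_less_iff) auto
        then have "ennreal (r0 + 1 / Suc n) < f x" using real by simp
        then show ?thesis using x unfolding A_def by auto
      next
        case top
        then show ?thesis using x unfolding A_def by auto
      qed
    next
      fix x assume "x \<in> (\<Union>n. A n)"
      then obtain n where "x \<in> A n" by auto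
      moreover have "Inf S \<le> ennreal (r0 + 1 / Suc n)" using r0 by (simp add: ennreal_leI)
      ultimately show "x \<in> {x \<in> space M01. f x > Inf S}" unfolding A_def
        by (auto intro: le_less_trans)
    qed
    have "distrib f (Inf S) = emeasure M01 (\<Union>n. A n)" unfolding distrib_def U ..
    also have "\<dots> = (SUP n. emeasure M01 (A n))"
      by (rule SUP_emeasure_incseq[OF Ameas Ainc, symmetric])
    also have "\<dots> \<le> ennreal t"
    proof (rule SUP_least)
      fix n show "emeasure M01 (A n) \<le> ennreal t"
        using AS[of n] unfolding S_def distrib_def A_def by simp
    qed
    finally show ?thesis unfolding r .
  qed
qed

lemma rearr_gt_iff:
  assumes f: "f \<in> borel_measurable M01"
  shows "y < rearr f t \<longleftrightarrow> ennreal t < distrib f y"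
proof
  assume "y < rearr f t"
  show "ennreal t < distrib f y"
  proof (rule ccontr)
    assume "\<not> ennreal t < distrib f y"
    then have "rearr f t \<le> y" unfolding rearr_def by (auto intro: Inf_lower)
    with \<open>y < rearr f t\<close> show False by simp
  qed
next
  assume a: "ennreal t < distrib f y"
  show "y < rearr f t"
  proof (rule ccontr)
    assume "\<not> y < rearr f t"
    then have "distrib f y \<le> distrib f (rearr f t)"
      by (intro distrib_antimono[OF f]) simp
    also have "\<dots> \<le> ennreal t" by (rule rearr_in[OF f])
    finally show False using a by simp
  qed
qed

lemma distrib_rearr:
  assumes f: "f \<in> borel_measurable M01"
  shows "distrib (rearr f) = distrib f"
proof
  fix y
  have d1: "distrib f y \<le> 1" by (rule distrib_le1)
  define r where "r = enn2real (distrib f y)"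
  have dtop: "distrib f y \<noteq> top" using d1 by (auto simp: top_unique)
  have r: "distrib f y = ennreal r" unfolding r_def using dtop by (simp add: ennreal_enn2real_if)
  have r0: "0 \<le> r" unfolding r_def by simp
  have r1: "r \<le> 1" using d1 unfolding r by (simp add: ennreal_le_1)
  have "{x \<in> space M01. y < rearr f x} = {0<..<r}"
  proof (intro set_eqI iffI)
    fix x assume "x \<in> {x \<in> space M01. y < rearr f x}"
    then have "0 < x" "ennreal x < ennreal r" using rearr_gt_iff[OF f] r by auto
    then show "x \<in> {0<..<r}" by (simp add: ennreal_less_iff)
  next
    fix x assume x: "x \<in> {0<..<r}"
    then have "ennreal x < ennreal r" by (simp add: ennreal_less_iff)
    then show "x \<in> {x \<in> space M01. y < rearr f x}" using rearr_gt_iff[OF f] r x r1 by auto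
  qed
  moreover have "emeasure M01 {0<..<r} = ennreal r"
  proof -
    have "{0<..<r} \<subseteq> {0<..<1::real}" using r1 by auto
    then have "emeasure M01 {0<..<r} = emeasure lborel {0<..<r}"
      by (intro emeasure_M01) simp_all
    also have "\<dots> = ennreal r" using r0 by simp
    finally show ?thesis .
  qed
  ultimately show "distrib (rearr f) y = distrib f y"
    unfolding distrib_def[of "rearr f"] r by simp
qed

lemma rearr_mono_distrib:
  assumes "\<And>y. distrib f y \<le> distrib g y"
  shows "rearr f t \<le> rearr g t"
  unfolding rearr_def by (rule Inf_superset_mono) (auto intro: order_trans assms)

lemma rho_distrib_le:
  assumes rho: "ri_norm \<rho>" and f: "f \<in> borel_measurable M01" and g: "g \<in> borel_measurable M01"
    and le: "\<And>y. distrib f y \<le> distrib g y"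
  shows "\<rho> f \<le> \<rho> g"
proof -
  have "\<rho> f = \<rho> (rearr f)"
    by (rule rho_ri[OF rho f rearr_meas]) (simp add: distrib_rearr[OF f])
  also have "\<dots> \<le> \<rho> (rearr g)"
    by (rule rho_mono[OF rho rearr_meas rearr_meas]) (rule rearr_mono_distrib[OF le])
  also have "\<dots> = \<rho> g"
    by (rule rho_ri[OF rho rearr_meas g]) (simp add: distrib_rearr[OF g])
  finally show ?thesis .
qed

lemma antimono_borel:
  fixes g :: "real \<Rightarrow> ennreal"
  assumes "antimono g" shows "g \<in> borel_measurable borel"
proof (rule borel_measurableI_greater)
  fix y
  have "is_interval {x. y < g x}"
    unfolding is_interval_1
  proof safe
    fix a b x assume "y < g a" "y < g b" "a \<le> x" "x \<le> b"
    then show "y < g x" using assms by (auto intro: less_le_trans[OF _ antimonoD[OF assms]])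
  qed
  then show "{x \<in> space borel. y < g x} \<in> sets borel"
    by (auto intro!: real_interval_borel_measurable)
qed

lemma rearr_borel[measurable]: "rearr f \<in> borel_measurable borel"
  by (rule antimono_borel) (simp add: antimonoI rearr_antimono)

definition FF :: "(real \<Rightarrow> ennreal) \<Rightarrow> real \<Rightarrow> ennreal" where
  "FF f t = (\<integral>\<^sup>+ s \<in> {0<..<t}. rearr f s \<partial>lborel)"

lemma FF_mono: "s \<le> t \<Longrightarrow> FF f s \<le> FF f t"
  unfolding FF_def
  by (intro nn_integral_mono) (auto simp: indicator_def)

lemma FF_scale:
  assumes "0 < t"
  shows "FF f t = ennreal t * (\<integral>\<^sup>+ x \<in> {0<..<1}. rearr f (t * x) \<partial>lborel)"
proof -
  have "FF f t = ennreal \<bar>t\<bar> * (\<integral>\<^sup>+ x. rearr f (0 + t * x) * indicator {0<..<t} (0 + t * x) \<partial>lborel)"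
    unfolding FF_def by (rule nn_integral_real_affine) (use assms in auto)
  also have "(\<lambda>x. rearr f (0 + t * x) * indicator {0<..<t} (0 + t * x)) = (\<lambda>x. rearr f (t * x) * indicator {0<..<1} x)"
    using assms by (auto simp: indicator_def fun_eq_iff zero_less_mult_iff mult_less_cancel_left1)
  finally show ?thesis using assms by simp
qed

lemma FF_ratio:
  assumes "0 < w" "w \<le> u"
  shows "ennreal (w / u) * FF f u \<le> FF f w"
proof -
  have "(\<integral>\<^sup>+ x \<in> {0<..<1}. rearr f (u * x) \<partial>lborel) \<le> (\<integral>\<^sup>+ x \<in> {0<..<1}. rearr f (w * x) \<partial>lborel)"
    using assms by (intro nn_integral_mono) (auto simp: indicator_def intro!: mult_right_mono rearr_antimono)
  then have "ennreal (w / u) * FF f u \<le> ennreal (w / u) * ennreal u * (\<integral>\<^sup>+ x \<in> {0<..<1}. rearr f (w * x) \<partial>lborel)"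
    using assms by (subst FF_scale) (auto simp: mult.assoc intro!: mult_left_mono)
  also have "ennreal (w / u) * ennreal u = ennreal w"
    using assms by (simp add: ennreal_mult[symmetric])
  finally show ?thesis using assms by (simp add: FF_scale)
qed

lemma FF_ge:
  assumes "0 < t"
  shows "ennreal t * rearr f t \<le> FF f t"
proof -
  have "ennreal t * rearr f t = (\<integral>\<^sup>+ s. rearr f t * indicator {0<..<t} s \<partial>lborel)"
    using assms by (simp add: nn_integral_cmult_indicator mult.commute)
  also have "\<dots> \<le> FF f t"
    unfolding FF_def by (intro nn_integral_mono) (auto simp: indicator_def intro: rearr_antimono)
  finally show ?thesis .
qed

lemma half_ge:
  assumes "0 < u"
  shows "ennreal (u / 2) * rearr f u \<le> (\<integral>\<^sup>+ w \<in> {u/2<..<u}. rearr f w \<partial>lborel)"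
proof -
  have "ennreal (u / 2) * rearr f u = (\<integral>\<^sup>+ s. rearr f u * indicator {u/2<..<u} s \<partial>lborel)"
    using assms by (simp add: nn_integral_cmult_indicator mult.commute)
  also have "\<dots> \<le> (\<integral>\<^sup>+ w \<in> {u/2<..<u}. rearr f w \<partial>lborel)"
    by (intro nn_integral_mono) (auto simp: indicator_def intro: rearr_antimono)
  finally show ?thesis .
qed

context
  fixes I :: "real \<Rightarrow> real"
  assumes qc: "quasiconcave I"
begin

lemma I_pos: "x \<in> {0<..<1} \<Longrightarrow> 0 < I x" and I_lt1: "x \<in> {0<..<1} \<Longrightarrow> I x < 1"
  using qc unfolding quasiconcave_def bij_betw_def by auto

lemma I_mono: "0 < x \<Longrightarrow> x \<le> y \<Longrightarrow> y < 1 \<Longrightarrow> I x \<le> I y"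
  using qc unfolding quasiconcave_def by (auto intro: mono_onD)

lemma I_q: "0 < x \<Longrightarrow> x \<le> y \<Longrightarrow> y < 1 \<Longrightarrow> I y / y \<le> I x / x"
  using qc monotone_onD[of "{0<..<1}" "(\<le>)" "(\<ge>)" "\<lambda>t. I t / t" x y]
  unfolding quasiconcave_def by auto

lemma I_q': "0 < x \<Longrightarrow> x \<le> y \<Longrightarrow> y < 1 \<Longrightarrow> x * I y \<le> y * I x"
  using I_q[of x y] by (simp add: field_simps)

definition J :: "real \<Rightarrow> real" where
  "J x = (if x \<le> 0 then 0 else if x < 1 then I x else 1)"

lemma J_eq: "x \<in> {0<..<1} \<Longrightarrow> J x = I x" by (simp add: J_def)

lemma J_mono: "mono J"
proof (rule monoI)
  fix x y :: real assume "x \<le> y"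
  then show "J x \<le> J y" unfolding J_def
    using I_pos[of x] I_pos[of y] I_lt1[of x] I_lt1[of y] I_mono[of x y] by auto
qed

lemma J_borel[measurable]: "J \<in> borel_measurable borel"
  by (rule borel_measurable_mono[OF J_mono])

lemma phi_mono_meas: "(\<lambda>t. ennreal (t / I t)) \<in> borel_measurable M01"
proof (rule mono_meas, rule mono_onI)
  fix r s :: real assume rs: "r \<in> {0<..<1}" "s \<in> {0<..<1}" "r \<le> s"
  have "r * I s \<le> s * I r" using I_q'[of r s] rs by auto
  then have "r / I r \<le> s / I s" using I_pos[OF rs(1)] I_pos[OF rs(2)] by (simp add: field_simps)
  then show "ennreal (r / I r) \<le> ennreal (s / I s)" by (rule ennreal_leI)
qed

lemma rearr2_eq: "rearr2 g t = ennreal (1 / t) * FF g t"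
  unfolding rearr2_def FF_def ..

lemma FF_mono_meas: "FF g \<in> borel_measurable M01"
  by (rule mono_meas) (auto intro!: mono_onI FF_mono)

lemma L_meas: "(\<lambda>t. ennreal (t / I t) * rearr2 g t) \<in> borel_measurable M01"
proof -
  have m1: "(\<lambda>t. ennreal (t / I t)) \<in> borel_measurable M01" by (rule phi_mono_meas)
  have m2: "FF g \<in> borel_measurable M01" by (rule FF_mono_meas)
  have m3: "(\<lambda>t::real. ennreal (1 / t)) \<in> borel_measurable M01"
    by (rule antimono_meas) (auto intro!: monotone_onI ennreal_leI frac_le)
  show ?thesis unfolding rearr2_eq using m1 m2 m3 by measurable
qed

lemma R_eq: "t \<in> {0<..<1} \<Longrightarrow> ennreal (t / I t) * rearr2 g t = ennreal (1 / I t) * FF g t"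
  unfolding rearr2_eq using I_pos[of t]
  by (simp add: mult.assoc[symmetric] ennreal_mult[symmetric])

end

definition RR :: "(real \<Rightarrow> real) \<Rightarrow> (real \<Rightarrow> ennreal) \<Rightarrow> real \<Rightarrow> ennreal" where
  "RR I g t = ennreal (t / I t) * rearr2 g t"

definition DD :: "(real \<Rightarrow> real) \<Rightarrow> (real \<Rightarrow> ennreal) \<Rightarrow> real \<Rightarrow> ennreal" where
  "DD I g t = (SUP u\<in>{t..<1}. RR I g u)"

context
  fixes I :: "real \<Rightarrow> real"
  assumes qc: "quasiconcave I"
begin

lemma RR_meas: "RR I g \<in> borel_measurable M01"
  unfolding RR_def[abs_def] by (rule L_meas[OF qc])

lemma DD_meas: "DD I g \<in> borel_measurable M01"
  unfolding DD_def by (rule antimono_meas) (auto intro!: monotone_onI SUP_subset_mono)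

lemma R_ratio1:
  assumes "0 < w" "w \<le> u" "u < 1"
  shows "ennreal (w / u) * RR I f u \<le> RR I f w"
proof -
  have "ennreal (w / u) * RR I f u = ennreal (1 / I u) * (ennreal (w / u) * FF f u)"
    unfolding RR_def using assms by (subst R_eq[OF qc]) (auto simp: mult_ac)
  also have "\<dots> \<le> ennreal (1 / I w) * FF f w"
  proof (rule mult_mono)
    show "ennreal (1 / I u) \<le> ennreal (1 / I w)"
      using assms I_pos[OF qc, of w] I_mono[OF qc, of w u] by (intro ennreal_leI frac_le) auto
    show "ennreal (w / u) * FF f u \<le> FF f w" using assms by (intro FF_ratio) auto
  qed auto
  also have "\<dots> = RR I f w" unfolding RR_def using assms by (subst R_eq[OF qc]) auto
  finally show ?thesis .
qed

lemma R_ratio2: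
  assumes "0 < u" "u \<le> w" "w < 1"
  shows "ennreal (u / w) * RR I f u \<le> RR I f w"
proof -
  have "ennreal (u / w) * RR I f u = (ennreal (u / w) * ennreal (1 / I u)) * FF f u"
    unfolding RR_def using assms by (subst R_eq[OF qc]) (auto simp: mult_ac)
  also have "\<dots> \<le> ennreal (1 / I w) * FF f w"
  proof (rule mult_mono)
    have "u * I w \<le> w * I u" using I_q'[OF qc, of u w] assms by auto
    then have "u / w * (1 / I u) \<le> 1 / I w"
      using assms I_pos[OF qc, of u] I_pos[OF qc, of w] by (simp add: field_simps)
    then show "ennreal (u / w) * ennreal (1 / I u) \<le> ennreal (1 / I w)"
      using assms I_pos[OF qc, of u] by (subst ennreal_mult[symmetric]) (auto intro: ennreal_leI)
    show "FF f u \<le> FF f w" using assms by (intro FF_mono) auto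
  qed auto
  also have "\<dots> = RR I f w" unfolding RR_def using assms by (subst R_eq[OF qc]) auto
  finally show ?thesis .
qed

lemma R_quarter:
  assumes u: "0 < u" "u < 1" and w: "u / 4 < w" "w < 2 * u" "w < 1"
  shows "ennreal (1 / 4) * RR I f u \<le> RR I f w"
proof (cases "w \<le> u")
  case True
  have "ennreal (1 / 4) * RR I f u \<le> ennreal (w / u) * RR I f u"
    using u w by (intro mult_right_mono ennreal_leI) (auto simp: field_simps)
  also have "\<dots> \<le> RR I f w" using True u w by (intro R_ratio1) auto
  finally show ?thesis .
next
  case False
  have "ennreal (1 / 4) * RR I f u \<le> ennreal (u / w) * RR I f u"
    using u w False by (intro mult_right_mono ennreal_leI) (auto simp: field_simps)
  also have "\<dots> \<le> RR I f w" using False u w by (intro R_ratio2) auto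
  finally show ?thesis .
qed

lemma quarter_less:
  fixes y V :: ennreal
  assumes "4 * y < V" shows "y < ennreal (1 / 4) * V"
proof -
  have "ennreal (1 / 4) * (4 * y) < ennreal (1 / 4) * V"
    by (rule ennreal_mult_strict_left_mono[OF assms]) auto
  moreover have "ennreal (1 / 4) * (4 * y) = y"
    by (simp add: mult.assoc[symmetric] ennreal_mult[symmetric] ennreal_numeral[symmetric] del: ennreal_numeral)
  ultimately show ?thesis by simp
qed

lemma K_lemma:
  assumes u: "0 < u" "u < 1" and gt: "4 * y < RR I f u"
  shows "ennreal (min u (3/4)) \<le> distrib (RR I f) y"
proof -
  define m where "m = min (2 * u) 1"
  have sub: "{u/4<..<m} \<subseteq> {x \<in> space M01. y < RR I f x}"
  proof
    fix w assume w: "w \<in> {u/4<..<m}"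
    have "y < ennreal (1 / 4) * RR I f u" by (rule quarter_less[OF gt])
    also have "\<dots> \<le> RR I f w" using w u by (intro R_quarter) (auto simp: m_def)
    finally show "w \<in> {x \<in> space M01. y < RR I f x}" using w u by (auto simp: m_def)
  qed
  have "emeasure M01 {u/4<..<m} = emeasure lborel {u/4<..<m}"
    using u by (intro emeasure_M01) (auto simp: m_def)
  also have "\<dots> = ennreal (m - u/4)" using u by (simp add: m_def)
  finally have e: "emeasure M01 {u/4<..<m} = ennreal (m - u/4)" .
  have "ennreal (min u (3/4)) \<le> ennreal (m - u/4)" using u by (intro ennreal_leI) (auto simp: m_def)
  also have "\<dots> \<le> distrib (RR I f) y"
    unfolding distrib_def e[symmetric]
    by (rule emeasure_mono[OF sub gt_set_meas[OF RR_meas]])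
  finally show ?thesis .
qed

end

context
  fixes I :: "real \<Rightarrow> real"
  assumes qc: "quasiconcave I"
begin

lemma D_gt:
  assumes x: "x \<in> {0<..<1}" and y: "y < ennreal (1/4) * (DD I f x * indicator S x)"
  shows "x \<in> S \<and> (\<exists>u. x \<le> u \<and> u < 1 \<and> ennreal (min u (3/4)) \<le> distrib (RR I f) y)"
proof -
  have xS: "x \<in> S" using y by (cases "x \<in> S") auto
  then have y': "y < ennreal (1/4) * DD I f x" using y by simp
  have "4 * y < 4 * (ennreal (1/4) * DD I f x)"
    by (rule ennreal_mult_strict_left_mono[OF y']) auto
  also have "4 * (ennreal (1/4) * DD I f x) = DD I f x"
    by (simp add: mult.assoc[symmetric] ennreal_mult[symmetric] ennreal_numeral[symmetric] del: ennreal_numeral)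
  finally have "4 * y < (SUP u\<in>{x..<1}. RR I f u)" unfolding DD_def .
  then obtain u where u: "u \<in> {x..<1}" "4 * y < RR I f u" by (auto simp: less_SUP_iff)
  have "ennreal (min u (3/4)) \<le> distrib (RR I f) y"
    using u x by (intro K_lemma[OF qc]) auto
  then show ?thesis using xS u by auto
qed

lemma D_part1:
  "distrib (\<lambda>x. ennreal (1/4) * (DD I f x * indicator {0<..3/4} x)) y \<le> distrib (RR I f) y"
proof -
  define d where "d = distrib (RR I f) y"
  define r where "r = enn2real d"
  have d1: "d \<le> 1" unfolding d_def by (rule distrib_le1)
  have dtop: "d \<noteq> top" using d1 by (auto simp: top_unique)
  have r: "d = ennreal r" unfolding r_def using dtop by (simp add: ennreal_enn2real_if)
  have r0: "0 \<le> r" unfolding r_def by simp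
  have sub: "{x \<in> space M01. y < ennreal (1/4) * (DD I f x * indicator {0<..3/4} x)} \<subseteq> {0<..<1} \<inter> {..r}"
  proof
    fix x assume "x \<in> {x \<in> space M01. y < ennreal (1/4) * (DD I f x * indicator {0<..3/4} x)}"
    then have x: "x \<in> {0<..<1}" and yx: "y < ennreal (1/4) * (DD I f x * indicator {0<..3/4} x)" by auto
    from D_gt[OF x yx] obtain u where u: "x \<in> {0<..3/4}" "x \<le> u" "ennreal (min u (3/4)) \<le> ennreal r"
      using r unfolding d_def by auto
    have "min u (3/4) \<le> r" using u(3) r0 by simp
    then show "x \<in> {0<..<1} \<inter> {..r}" using u x by auto
  qed
  have "emeasure M01 ({0<..<1} \<inter> {..r}) = emeasure lborel ({0<..<1} \<inter> {..r})"
    by (intro emeasure_M01) auto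
  also have "\<dots> \<le> emeasure lborel {0..r}" by (intro emeasure_mono) auto
  also have "\<dots> = d" using r r0 by simp
  finally have e: "emeasure M01 ({0<..<1} \<inter> {..r}) \<le> d" .
  have "distrib (\<lambda>x. ennreal (1/4) * (DD I f x * indicator {0<..3/4} x)) y \<le> emeasure M01 ({0<..<1} \<inter> {..r})"
    unfolding distrib_def by (rule emeasure_mono[OF sub]) (auto intro!: sets_M01I)
  with e show ?thesis unfolding d_def by simp
qed

lemma D_part2:
  "distrib (\<lambda>x. ennreal (1/4) * (DD I f x * indicator {3/4<..<1} x)) y \<le> distrib (RR I f) y"
proof (cases "{x \<in> space M01. y < ennreal (1/4) * (DD I f x * indicator {3/4<..<1} x)} = {}")
  case True
  then show ?thesis unfolding distrib_def True by simp
next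
  case False
  then obtain x where x: "x \<in> {0<..<1}" and y: "y < ennreal (1/4) * (DD I f x * indicator {3/4<..<1} x)" by auto
  from D_gt[OF x y] obtain u where u: "x \<in> {3/4<..<1}" "x \<le> u" "ennreal (min u (3/4)) \<le> distrib (RR I f) y"
    by auto
  have "min u (3/4) = 3/4" using u by auto
  with u have d: "ennreal (3/4) \<le> distrib (RR I f) y" by simp
  have sub: "{x \<in> space M01. y < ennreal (1/4) * (DD I f x * indicator {3/4<..<1} x)} \<subseteq> {3/4<..<1}"
    by (auto simp: indicator_def)
  have "distrib (\<lambda>x. ennreal (1/4) * (DD I f x * indicator {3/4<..<1} x)) y \<le> emeasure M01 {3/4<..<1::real}"
    unfolding distrib_def by (rule emeasure_mono[OF sub]) (auto intro!: sets_M01I)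
  also have "\<dots> = emeasure lborel {3/4<..<1::real}" by (intro emeasure_M01) auto
  also have "\<dots> = ennreal (1/4)" by simp
  also have "\<dots> \<le> ennreal (3/4)" by (intro ennreal_leI) simp
  finally show ?thesis using d by simp
qed

lemma rho_D:
  assumes rho: "ri_norm \<rho>"
  shows "\<rho> (DD I f) \<le> 8 * \<rho> (RR I f)"
proof -
  define S1 where "S1 = {0<..3/4::real}"
  define S2 where "S2 = {3/4<..<1::real}"
  have S1m: "S1 \<in> sets M01" unfolding S1_def by (intro sets_M01I) auto
  have S2m: "S2 \<in> sets M01" unfolding S2_def by (intro sets_M01I) auto
  define D1 where "D1 x = DD I f x * indicator S1 x" for x
  define D2 where "D2 x = DD I f x * indicator S2 x" for x
  have Dm: "DD I f \<in> borel_measurable M01" by (rule DD_meas[OF qc])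
  have D1m: "D1 \<in> borel_measurable M01" unfolding D1_def[abs_def] using Dm S1m by measurable
  have D2m: "D2 \<in> borel_measurable M01" unfolding D2_def[abs_def] using Dm S2m by measurable
  have Rm: "RR I f \<in> borel_measurable M01" by (rule RR_meas[OF qc])
  have part: "\<rho> Di \<le> 4 * \<rho> (RR I f)"
    if Dim: "Di \<in> borel_measurable M01"
      and dl: "\<And>y. distrib (\<lambda>x. ennreal (1/4) * Di x) y \<le> distrib (RR I f) y" for Di
  proof -
    have q: "(\<lambda>x. ennreal (1/4) * Di x) \<in> borel_measurable M01" using Dim by measurable
    have "Di = (\<lambda>x. ennreal 4 * (ennreal (1/4) * Di x))"
      by (simp add: fun_eq_iff mult.assoc[symmetric] ennreal_mult[symmetric] del: ennreal_numeral)
    then have "\<rho> Di = ennreal 4 * \<rho> (\<lambda>x. ennreal (1/4) * Di x)"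
      using rho_hom[OF rho q, of 4] by simp
    also have "\<dots> \<le> ennreal 4 * \<rho> (RR I f)"
      by (intro mult_left_mono rho_distrib_le[OF rho q Rm dl]) auto
    finally show ?thesis by simp
  qed
  have summ: "(\<lambda>x. D1 x + D2 x) \<in> borel_measurable M01"
    using D1m D2m by (rule borel_measurable_add)
  have "\<rho> (DD I f) \<le> \<rho> (\<lambda>x. D1 x + D2 x)"
  proof (rule rho_mono[OF rho summ Dm])
    fix x :: real assume x: "x \<in> {0<..<1}"
    show "DD I f x \<le> D1 x + D2 x"
    proof (cases "x \<le> 3/4")
      case True
      then have "D1 x = DD I f x" using x by (simp add: D1_def S1_def)
      then show ?thesis by simp
    next
      case False
      then have "D2 x = DD I f x" using x by (simp add: D2_def S2_def)
      then show ?thesis by simp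
    qed
  qed
  also have "\<dots> \<le> \<rho> D1 + \<rho> D2" by (rule rho_add[OF rho D1m D2m])
  also have "\<dots> \<le> 4 * \<rho> (RR I f) + 4 * \<rho> (RR I f)"
    by (intro add_mono part D1m D2m) (simp_all add: D1_def D2_def S1_def S2_def D_part1 D_part2)
  also have "\<dots> = (4 + 4) * \<rho> (RR I f)" by (rule distrib_right[symmetric])
  also have "(4 + 4 :: ennreal) = 8" by simp
  finally show ?thesis by simp
qed

end

definition GG :: "(real \<Rightarrow> real) \<Rightarrow> (real \<Rightarrow> ennreal) \<Rightarrow> real \<Rightarrow> real \<Rightarrow> ennreal" where
  "GG I f a b = (SUP u\<in>{a..<b}. ennreal (u / I u) * rearr f u)"

definition kk :: "(real \<Rightarrow> real) \<Rightarrow> real \<Rightarrow> real \<Rightarrow> real \<Rightarrow> ennreal" where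
  "kk Jf t s w = (if s/4 < w \<and> w < t then (if s/2 < w then ennreal (1 / Jf w) else ennreal (1 / Jf (s/2))) else 0)"

context
  fixes I :: "real \<Rightarrow> real"
  assumes qc: "quasiconcave I"
begin

lemma T_anti:
  assumes "0 < x" "x \<le> y" "y < 1"
  shows "T_op I f y \<le> T_op I f x"
  unfolding T_op_def
proof (rule mult_mono)
  show "ennreal (I y / y) \<le> ennreal (I x / x)" using I_q[OF qc] assms by (intro ennreal_leI) auto
  show "(SUP s\<in>{y..<1}. ennreal (s / I s) * rearr f s) \<le> (SUP s\<in>{x..<1}. ennreal (s / I s) * rearr f s)"
    using assms by (intro SUP_subset_mono) auto
qed auto

lemma rearr_T:
  assumes "0 < s" "s < 1"
  shows "rearr (T_op I f) s \<le> T_op I f (s/2)"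
proof -
  have sub: "{x \<in> space M01. T_op I f (s/2) < T_op I f x} \<subseteq> {0<..<s/2}"
  proof
    fix x assume x: "x \<in> {x \<in> space M01. T_op I f (s/2) < T_op I f x}"
    show "x \<in> {0<..<s/2}"
    proof (rule ccontr)
      assume "x \<notin> {0<..<s/2}"
      then have "s/2 \<le> x" using x by auto
      then have "T_op I f x \<le> T_op I f (s/2)" using x assms by (intro T_anti) auto
      then show False using x by auto
    qed
  qed
  have "distrib (T_op I f) (T_op I f (s/2)) \<le> emeasure M01 {0<..<s/2}"
    unfolding distrib_def by (rule emeasure_mono[OF sub]) (use assms in \<open>auto intro!: sets_M01I\<close>)
  also have "\<dots> = emeasure lborel {0<..<s/2}" using assms by (intro emeasure_M01) auto
  also have "\<dots> = ennreal (s/2)" using assms by simp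
  also have "\<dots> \<le> ennreal s" using assms by (intro ennreal_leI) auto
  finally show ?thesis unfolding rearr_def by (intro Inf_lower) simp
qed

lemma T_half:
  assumes "0 < s" "s < 1"
  shows "T_op I f (s/2) \<le> 2 * (ennreal (I s / s) * GG I f (s/2) 1)"
proof -
  have "T_op I f (s/2) = ennreal (I (s/2) / (s/2)) * GG I f (s/2) 1"
    unfolding T_op_def GG_def ..
  also have "\<dots> \<le> ennreal (2 * (I s / s)) * GG I f (s/2) 1"
  proof (intro mult_right_mono ennreal_leI)
    have "I (s/2) \<le> I s" using assms by (intro I_mono[OF qc]) auto
    then show "I (s / 2) / (s / 2) \<le> 2 * (I s / s)" using assms by (simp add: field_simps)
  qed auto
  also have "\<dots> = 2 * (ennreal (I s / s) * GG I f (s/2) 1)"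
    using assms I_pos[OF qc, of s] by (subst ennreal_mult) (auto simp: mult.assoc)
  finally show ?thesis .
qed

lemma sup_le_plus: "sup (a::ennreal) b \<le> a + b"
  by (intro sup_least) (auto intro: add_increasing add_increasing2)

lemma G_split:
  assumes "0 < s" "s < t" "t < 1"
  shows "GG I f (s/2) 1 \<le> GG I f t 1 + GG I f (s/2) t"
proof -
  have "{s/2..<1} = {s/2..<t} \<union> {t..<1}" using assms by auto
  then have "GG I f (s/2) 1 = sup (GG I f (s/2) t) (GG I f t 1)"
    unfolding GG_def by (simp add: SUP_union)
  also have "\<dots> \<le> GG I f t 1 + GG I f (s/2) t" by (metis sup_le_plus sup_commute)
  finally show ?thesis .
qed

lemma A_le_D:
  assumes "0 < t" "t < 1"
  shows "GG I f t 1 \<le> DD I f t"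
  unfolding GG_def DD_def
proof (rule SUP_mono)
  fix u assume u: "u \<in> {t..<1}"
  have "ennreal (u / I u) * rearr f u \<le> RR I f u"
    unfolding RR_def rearr2_eq[OF qc]
  proof (rule mult_left_mono)
    have "rearr f u = ennreal (1/u) * (ennreal u * rearr f u)"
      using u assms by (simp add: mult.assoc[symmetric] ennreal_mult[symmetric])
    also have "\<dots> \<le> ennreal (1/u) * FF f u"
      using u assms by (intro mult_left_mono FF_ge) auto
    finally show "rearr f u \<le> ennreal (1/u) * FF f u" .
  qed auto
  then show "\<exists>m\<in>{t..<1}. ennreal (u / I u) * rearr f u \<le> RR I f m" using u by auto
qed

lemmas J_borel'[measurable] = J_borel[OF qc]

lemma kk_meas[measurable]: "(\<lambda>(s, w). kk (J I) t s w) \<in> borel_measurable (lborel \<Otimes>\<^sub>M lborel)"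
  unfolding kk_def[abs_def] by measurable

lemma B_bound:
  assumes s: "0 < s" "s < t" "t < 1"
  shows "GG I f (s/2) t \<le> 2 * (\<integral>\<^sup>+ w. rearr f w * kk (J I) t s w \<partial>lborel)"
  unfolding GG_def
proof (rule SUP_least)
  fix u assume u: "u \<in> {s/2..<t}"
  have u0: "0 < u" using u s by auto
  have Iu: "0 < I u" using u s by (intro I_pos[OF qc]) auto
  have "ennreal (u / I u) * rearr f u = ennreal (2 / I u) * (ennreal (u/2) * rearr f u)"
    using u0 Iu by (simp add: mult.assoc[symmetric] ennreal_mult[symmetric])
  also have "\<dots> \<le> ennreal (2 / I u) * (\<integral>\<^sup>+ w \<in> {u/2<..<u}. rearr f w \<partial>lborel)"
    using u0 by (intro mult_left_mono half_ge) auto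
  also have "\<dots> = (\<integral>\<^sup>+ w. ennreal (2 / I u) * (rearr f w * indicator {u/2<..<u} w) \<partial>lborel)"
    by (rule nn_integral_cmult[symmetric]) measurable
  also have "\<dots> \<le> (\<integral>\<^sup>+ w. 2 * (rearr f w * kk (J I) t s w) \<partial>lborel)"
  proof (rule nn_integral_mono)
    fix w
    show "ennreal (2 / I u) * (rearr f w * indicator {u/2<..<u} w) \<le> 2 * (rearr f w * kk (J I) t s w)"
    proof (cases "w \<in> {u/2<..<u}")
      case False then show ?thesis by simp
    next
      case True
      have w0: "0 < w" "w < 1" using True u0 u s by auto
      have "ennreal (1 / I u) \<le> kk (J I) t s w"
      proof (cases "s/2 < w")
        case True
        have "I w \<le> I u" using \<open>w \<in> {u/2<..<u}\<close> w0 u s by (intro I_mono[OF qc]) auto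
        then have "1 / I u \<le> 1 / J I w"
          using w0 I_pos[OF qc, of w] by (simp add: J_eq[OF qc] frac_le)
        then show ?thesis using True \<open>w \<in> {u/2<..<u}\<close> u s
          by (simp add: kk_def ennreal_leI)
      next
        case False
        have "I (s/2) \<le> I u" using u s by (intro I_mono[OF qc]) auto
        then have "1 / I u \<le> 1 / J I (s/2)"
          using s I_pos[OF qc, of "s/2"] by (simp add: J_eq[OF qc] frac_le)
        then show ?thesis using False \<open>w \<in> {u/2<..<u}\<close> u s
          by (simp add: kk_def ennreal_leI)
      qed
      moreover have "ennreal (2 / I u) = 2 * ennreal (1 / I u)"
      proof -
        have "ennreal (2 / I u) = ennreal (2 * (1 / I u))" by simp
        also have "\<dots> = ennreal 2 * ennreal (1 / I u)" by (rule ennreal_mult) (use Iu in auto)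
        finally show ?thesis by simp
      qed
      ultimately have "ennreal (2 / I u) \<le> 2 * kk (J I) t s w"
        by (simp add: mult_left_mono)
      then show ?thesis using True
        by (simp add: mult.assoc[symmetric] mult.commute[of "rearr f w"] mult_right_mono)
    qed
  qed
  also have "\<dots> = 2 * (\<integral>\<^sup>+ w. rearr f w * kk (J I) t s w \<partial>lborel)"
    by (rule nn_integral_cmult) measurable
  finally show "ennreal (u / I u) * rearr f u \<le> 2 * (\<integral>\<^sup>+ w. rearr f w * kk (J I) t s w \<partial>lborel)" .
qed

end

context
  fixes I :: "real \<Rightarrow> real" and C :: real
  assumes qc: "quasiconcave I"
    and hyp: "\<forall>t \<in> {0<..<1}. (\<integral>\<^sup>+ s \<in> {0<..<t}. ennreal (I s / s) \<partial>lborel) \<le> ennreal C * ennreal (I t)"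
begin

lemmas J_borel''[measurable] = J_borel[OF qc]

lemma hypJ:
  assumes "0 < m" "m < 1"
  shows "(\<integral>\<^sup>+ s. ennreal (J I s / s) * indicator {0<..<m} s \<partial>lborel) \<le> ennreal C * ennreal (I m)"
proof -
  have "(\<integral>\<^sup>+ s. ennreal (J I s / s) * indicator {0<..<m} s \<partial>lborel) = (\<integral>\<^sup>+ s \<in> {0<..<m}. ennreal (I s / s) \<partial>lborel)"
    using assms by (intro nn_integral_cong) (auto simp: indicator_def J_eq[OF qc])
  also have "\<dots> \<le> ennreal C * ennreal (I m)" using hyp assms by auto
  finally show ?thesis .
qed

lemma inner:
  assumes t: "0 < t" "t < 1"
  shows "(\<integral>\<^sup>+ s. indicator {0<..<t} s * ennreal (J I s / s) * kk (J I) t s w \<partial>lborel)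
          \<le> indicator {0<..<t} w * (2 * ennreal C + 2)"
proof (cases "w \<in> {0<..<t}")
  case False
  have "(\<lambda>s. indicator {0<..<t} s * ennreal (J I s / s) * kk (J I) t s w) = (\<lambda>s. 0)"
  proof
    fix s show "indicator {0<..<t} s * ennreal (J I s / s) * kk (J I) t s w = 0"
      using False by (auto simp: kk_def indicator_def)
  qed
  then show ?thesis by simp
next
  case True
  then have w: "0 < w" "w < t" by auto
  define m where "m = min (2 * w) t"
  have m: "0 < m" "m < 1" "w \<le> m" "m \<le> 2 * w" using w t by (auto simp: m_def)
  have Iw: "0 < I w" using w t by (intro I_pos[OF qc]) auto
  have pw: "indicator {0<..<t} s * ennreal (J I s / s) * kk (J I) t s w
      \<le> ennreal (1 / I w) * (ennreal (J I s / s) * indicator {0<..<m} s) + ennreal (1 / w) * indicator {2*w..4*w} s" for s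
  proof (cases "s \<in> {0<..<t} \<and> s/4 < w")
    case False
    then have "indicator {0<..<t} s * ennreal (J I s / s) * kk (J I) t s w = 0"
      by (auto simp: kk_def indicator_def)
    then show ?thesis by (simp only:) simp
  next
    case True
    then have s: "0 < s" "s < t" "s/4 < w" by auto
    show ?thesis
    proof (cases "s/2 < w")
      case True
      have "indicator {0<..<t} s * ennreal (J I s / s) * kk (J I) t s w = ennreal (1 / I w) * (ennreal (J I s / s) * indicator {0<..<m} s)"
        using s w t True by (simp add: kk_def J_eq[OF qc] indicator_def m_def mult.commute)
      then show ?thesis by simp
    next
      case False
      have Is2: "0 < I (s/2)" using s t by (intro I_pos[OF qc]) auto
      have "I s / s \<le> I (s/2) / (s/2)" using s t by (intro I_q[OF qc]) auto
      then have "I s \<le> 2 * I (s/2)" using s by (simp add: field_simps)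
      then have "I s / s * (1 / I (s/2)) \<le> 2 / s" using s Is2 by (simp add: field_simps)
      also have "2 / s \<le> 1 / w" using False w s by (simp add: field_simps)
      finally have le: "I s / s * (1 / I (s/2)) \<le> 1 / w" .
      have "indicator {0<..<t} s * ennreal (J I s / s) * kk (J I) t s w = ennreal (I s / s) * ennreal (1 / I (s/2))"
        using s w t False by (simp add: kk_def J_eq[OF qc] indicator_def)
      also have "\<dots> = ennreal (I s / s * (1 / I (s/2)))"
        using s t Is2 I_pos[OF qc, of s] by (subst ennreal_mult) auto
      also have "\<dots> \<le> ennreal (1 / w) * indicator {2*w..4*w} s"
        using le False s by (auto simp: indicator_def intro: ennreal_leI)
      finally show ?thesis by (simp add: add_increasing)
    qed
  qed
  have "(\<integral>\<^sup>+ s. indicator {0<..<t} s * ennreal (J I s / s) * kk (J I) t s w \<partial>lborel)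
     \<le> (\<integral>\<^sup>+ s. ennreal (1 / I w) * (ennreal (J I s / s) * indicator {0<..<m} s) + ennreal (1 / w) * indicator {2*w..4*w} s \<partial>lborel)"
    by (intro nn_integral_mono pw)
  also have "\<dots> = ennreal (1 / I w) * (\<integral>\<^sup>+ s. ennreal (J I s / s) * indicator {0<..<m} s \<partial>lborel)
      + ennreal (1 / w) * emeasure lborel {2*w..4*w}"
    by (subst nn_integral_add) (auto simp: nn_integral_cmult nn_integral_cmult_indicator)
  also have "\<dots> \<le> ennreal (1 / I w) * (ennreal C * ennreal (I m)) + ennreal (1 / w) * ennreal (2 * w)"
    using w by (intro add_mono mult_left_mono hypJ m) auto
  also have "\<dots> \<le> 2 * ennreal C + 2"
  proof (intro add_mono)
    have "I m \<le> 2 * I w"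
    proof -
      have "w * I m \<le> m * I w" using m t by (intro I_q'[OF qc]) auto
      also have "\<dots> \<le> (2 * w) * I w" using m Iw by (intro mult_right_mono) auto
      finally show ?thesis using w by (simp add: mult.assoc)
    qed
    then have "1 / I w * I m \<le> 2" using Iw by (simp add: field_simps)
    then have "ennreal (1 / I w) * ennreal (I m) \<le> 2"
      using Iw I_pos[OF qc, of m] m by (subst ennreal_mult[symmetric]) (auto simp: ennreal_leI[of _ 2, simplified])
    then have "ennreal C * (ennreal (1 / I w) * ennreal (I m)) \<le> ennreal C * 2"
      by (rule mult_left_mono) auto
    then show "ennreal (1 / I w) * (ennreal C * ennreal (I m)) \<le> 2 * ennreal C"
      by (simp add: mult_ac)
    have "ennreal (1 / w) * ennreal (2 * w) = ennreal (1 / w * (2 * w))"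
      using w by (subst ennreal_mult) auto
    also have "\<dots> = 2" using w by simp
    finally show "ennreal (1 / w) * ennreal (2 * w) \<le> 2" by simp
  qed
  finally show ?thesis using True by simp
qed

end

context
  fixes I :: "real \<Rightarrow> real" and C :: real
  assumes qc: "quasiconcave I"
    and hyp: "\<forall>t \<in> {0<..<1}. (\<integral>\<^sup>+ s \<in> {0<..<t}. ennreal (I s / s) \<partial>lborel) \<le> ennreal C * ennreal (I t)"
begin

lemmas J_borel3[measurable] = J_borel[OF qc]
lemmas kk_meas3[measurable] = kk_meas[OF qc]

lemma main_int:
  assumes t: "0 < t" "t < 1"
  shows "(\<integral>\<^sup>+ s \<in> {0<..<t}. rearr (T_op I f) s \<partial>lborel)
     \<le> 2 * (GG I f t 1 * (ennreal C * ennreal (I t))) + 4 * ((2 * ennreal C + 2) * FF f t)"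
proof -
  define A where "A = GG I f t 1"
  define \<Phi> where "\<Phi> s = (\<integral>\<^sup>+ w. rearr f w * kk (J I) t s w \<partial>lborel)" for s
  have \<Phi>m[measurable]: "\<Phi> \<in> borel_measurable lborel"
    unfolding \<Phi>_def by measurable
  have pw: "rearr (T_op I f) s * indicator {0<..<t} s
      \<le> 2 * (A * (ennreal (J I s / s) * indicator {0<..<t} s)) + 4 * (indicator {0<..<t} s * ennreal (J I s / s) * \<Phi> s)" for s
  proof (cases "s \<in> {0<..<t}")
    case False then show ?thesis by simp
  next
    case True
    then have s: "0 < s" "s < t" by auto
    have "rearr (T_op I f) s \<le> T_op I f (s/2)" using s t by (intro rearr_T[OF qc]) auto
    also have "\<dots> \<le> 2 * (ennreal (I s / s) * GG I f (s/2) 1)" using s t by (intro T_half[OF qc]) auto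
    also have "\<dots> \<le> 2 * (ennreal (I s / s) * (A + 2 * \<Phi> s))"
    proof (intro mult_left_mono)
      have "GG I f (s/2) 1 \<le> GG I f t 1 + GG I f (s/2) t" using s t by (intro G_split[OF qc]) auto
      also have "\<dots> \<le> A + 2 * \<Phi> s" unfolding A_def \<Phi>_def using s t by (intro add_left_mono B_bound[OF qc]) auto
      finally show "GG I f (s/2) 1 \<le> A + 2 * \<Phi> s" .
    qed auto
    also have "\<dots> = 2 * (A * (ennreal (J I s / s) * indicator {0<..<t} s)) + 4 * (indicator {0<..<t} s * ennreal (J I s / s) * \<Phi> s)"
      using s t by (simp add: J_eq[OF qc] indicator_def algebra_simps)
    finally show ?thesis using True by simp
  qed
  have "(\<integral>\<^sup>+ s \<in> {0<..<t}. rearr (T_op I f) s \<partial>lborel)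
     \<le> (\<integral>\<^sup>+ s. 2 * (A * (ennreal (J I s / s) * indicator {0<..<t} s)) + 4 * (indicator {0<..<t} s * ennreal (J I s / s) * \<Phi> s) \<partial>lborel)"
    by (intro nn_integral_mono pw)
  also have "\<dots> = 2 * (A * (\<integral>\<^sup>+ s. ennreal (J I s / s) * indicator {0<..<t} s \<partial>lborel))
      + 4 * (\<integral>\<^sup>+ s. indicator {0<..<t} s * ennreal (J I s / s) * \<Phi> s \<partial>lborel)"
    by (subst nn_integral_add) (auto simp: nn_integral_cmult)
  also have "(\<integral>\<^sup>+ s. indicator {0<..<t} s * ennreal (J I s / s) * \<Phi> s \<partial>lborel)
      = (\<integral>\<^sup>+ s. (\<integral>\<^sup>+ w. indicator {0<..<t} s * ennreal (J I s / s) * (rearr f w * kk (J I) t s w) \<partial>lborel) \<partial>lborel)"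
    unfolding \<Phi>_def by (intro nn_integral_cong nn_integral_cmult[symmetric]) measurable
  also have "\<dots> = (\<integral>\<^sup>+ w. (\<integral>\<^sup>+ s. indicator {0<..<t} s * ennreal (J I s / s) * (rearr f w * kk (J I) t s w) \<partial>lborel) \<partial>lborel)"
    by (rule lborel_pair.Fubini'[symmetric]) measurable
  also have "\<dots> = (\<integral>\<^sup>+ w. rearr f w * (\<integral>\<^sup>+ s. indicator {0<..<t} s * ennreal (J I s / s) * kk (J I) t s w \<partial>lborel) \<partial>lborel)"
    by (intro nn_integral_cong) (subst nn_integral_cmult[symmetric], measurable, simp add: mult_ac)
  also have "\<dots> \<le> (\<integral>\<^sup>+ w. rearr f w * (indicator {0<..<t} w * (2 * ennreal C + 2)) \<partial>lborel)"
    using t by (intro nn_integral_mono mult_left_mono inner[OF qc hyp]) auto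
  also have "\<dots> = (2 * ennreal C + 2) * FF f t"
    unfolding FF_def by (subst nn_integral_cmult[symmetric]) (measurable, simp add: mult_ac)
  also have "(\<integral>\<^sup>+ s. ennreal (J I s / s) * indicator {0<..<t} s \<partial>lborel) \<le> ennreal C * ennreal (I t)"
    using t by (intro hypJ[OF qc hyp])
  finally show ?thesis unfolding A_def
    by (simp add: mult_left_mono) 
qed

end

lemma arith8: "2 * (c::ennreal) * d + 4 * (2 * c + 2) * d = (10 * c + 8) * d"
proof -
  have a: "4 * (2 * c + 2) * d = 8 * (c * d) + 8 * d" by (simp add: distrib_left distrib_right mult.assoc)
  have e: "(10::ennreal) * (c*d) = 2*(c*d) + 8*(c*d)" using distrib_right[of "2::ennreal" 8 "c*d"] by simp
  have "(10 * c + 8) * d = 10 * (c * d) + 8 * d" by (simp add: distrib_right mult.assoc)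
  also have "\<dots> = 2 * (c * d) + 8 * (c * d) + 8 * d" using e by simp
  finally show ?thesis using a by (simp add: add.assoc mult.assoc)
qed

theorem theorem3p14:
  fixes \<rho> :: "(real \<Rightarrow> ennreal) \<Rightarrow> ennreal" and I :: "real \<Rightarrow> real"
  assumes "ri_norm \<rho>"
    and "quasiconcave I"
    and "\<exists>C::real. \<forall>t \<in> {0<..<1}.
           (\<integral>\<^sup>+ s \<in> {0<..<t}. ennreal (I s / s) \<partial>lborel) \<le> ennreal C * ennreal (I t)"
  shows "\<exists>C::real. C > 0 \<and> (\<forall>f \<in> borel_measurable M01.
           \<rho> (\<lambda>t. ennreal (t / I t) * rearr2 (T_op I f) t)
             \<le> ennreal C * \<rho> (\<lambda>t. ennreal (t / I t) * rearr2 f t))"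
proof -
  note rho = assms(1) and qc = assms(2)
  obtain C0 where C0: "\<forall>t \<in> {0<..<1}.
           (\<integral>\<^sup>+ s \<in> {0<..<t}. ennreal (I s / s) \<partial>lborel) \<le> ennreal C0 * ennreal (I t)"
    using assms(3) by blast
  define C where "C = max C0 0"
  have C: "0 \<le> C" unfolding C_def by simp
  have hyp: "\<forall>t \<in> {0<..<1}.
           (\<integral>\<^sup>+ s \<in> {0<..<t}. ennreal (I s / s) \<partial>lborel) \<le> ennreal C * ennreal (I t)"
  proof -
    have "ennreal (max C0 0) = ennreal C0"
      by (cases "0 \<le> C0") (auto simp: max_def ennreal_neg)
    then show ?thesis using C0 unfolding C_def by simp
  qed
  define K where "K = 10 * C + 8"
  have K: "0 < K" using C unfolding K_def by simp
  have eK: "ennreal K = 10 * ennreal C + 8"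
    unfolding K_def using C by (simp add: ennreal_plus ennreal_mult)
  show ?thesis
  proof (intro exI[of _ "8 * K"] conjI ballI)
    show "0 < 8 * K" using K by simp
    fix f :: "real \<Rightarrow> ennreal" assume f: "f \<in> borel_measurable M01"
    have Lm: "(\<lambda>t. ennreal (t / I t) * rearr2 (T_op I f) t) \<in> borel_measurable M01"
      by (rule L_meas[OF qc])
    have Dm: "DD I f \<in> borel_measurable M01" by (rule DD_meas[OF qc])
    have KDm: "(\<lambda>t. ennreal K * DD I f t) \<in> borel_measurable M01" using Dm by measurable
    have pw: "ennreal (t / I t) * rearr2 (T_op I f) t \<le> ennreal K * DD I f t" if t: "t \<in> {0<..<1}" for t
    proof -
      have It: "0 < I t" using t by (rule I_pos[OF qc])
      have one: "ennreal (1 / I t) * ennreal (I t) = 1"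
        using It by (subst ennreal_mult[symmetric]) auto
      have "ennreal (t / I t) * rearr2 (T_op I f) t = ennreal (1 / I t) * FF (T_op I f) t"
        by (rule R_eq[OF qc t])
      also have "\<dots> \<le> ennreal (1 / I t) * (2 * (GG I f t 1 * (ennreal C * ennreal (I t))) + 4 * ((2 * ennreal C + 2) * FF f t))"
        using t main_int[OF qc hyp, of t f] unfolding FF_def[of "T_op I f"] by (intro mult_left_mono) auto
      also have "\<dots> = 2 * ennreal C * GG I f t 1 * (ennreal (1 / I t) * ennreal (I t))
            + 4 * (2 * ennreal C + 2) * (ennreal (1 / I t) * FF f t)"
        by (simp only: distrib_left mult.assoc mult.commute mult.left_commute)
      also have "\<dots> = 2 * ennreal C * GG I f t 1 + 4 * (2 * ennreal C + 2) * (ennreal (1 / I t) * FF f t)"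
        unfolding one by simp
      also have "ennreal (1 / I t) * FF f t = RR I f t"
        unfolding RR_def using t by (rule R_eq[OF qc, symmetric])
      also have "2 * ennreal C * GG I f t 1 + 4 * (2 * ennreal C + 2) * RR I f t
          \<le> 2 * ennreal C * DD I f t + 4 * (2 * ennreal C + 2) * DD I f t"
      proof (intro add_mono mult_left_mono)
        show "GG I f t 1 \<le> DD I f t"
          using t A_le_D[OF qc, of t f] by simp
        show "RR I f t \<le> DD I f t" unfolding DD_def using t by (intro SUP_upper) auto
      qed auto
      also have "\<dots> = ennreal K * DD I f t"
        unfolding eK by (rule arith8)
      finally show ?thesis .
    qed
    have "\<rho> (\<lambda>t. ennreal (t / I t) * rearr2 (T_op I f) t) \<le> \<rho> (\<lambda>t. ennreal K * DD I f t)"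
      by (rule rho_mono[OF rho KDm Lm pw])
    also have "\<dots> = ennreal K * \<rho> (DD I f)" using K by (intro rho_hom[OF rho Dm]) simp
    also have "\<dots> \<le> ennreal K * (8 * \<rho> (RR I f))" by (intro mult_left_mono rho_D[OF qc rho]) auto
    also have "\<dots> = ennreal (8 * K) * \<rho> (\<lambda>t. ennreal (t / I t) * rearr2 f t)"
      unfolding RR_def[abs_def] using K by (simp add: ennreal_mult mult_ac)
    finally show "\<rho> (\<lambda>t. ennreal (t / I t) * rearr2 (T_op I f) t) \<le> ennreal (8 * K) * \<rho> (\<lambda>t. ennreal (t / I t) * rearr2 f t)" .
  qed
qed


end
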